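(* Let $\Phi:\mathbb{R}^N\to\mathbb{R}^M$ and $L:\mathbb{R}^P\to\mathbb{R}^N$ be linear operators, let $\|\cdot\|_A$ be a norm on $\mathbb{R}^P$ with dual norm $\|\cdot\|_A^*$, and set $R(x)=\|L^*x\|_A$. Let $y\in\mathbb{R}^M$, $\lambda>0$, and let $x^\star$ be a minimizer of $\min_{x\in\mathbb{R}^N}\tfrac12\|y-\Phi x\|_2^2+\lambda R(x)$. Assume $\|\cdot\|_A$ is decomposable at $u^\star=L^*x^\star$ with associated subspace $T$ and vector $e\in T$, let $S=T^\perp$, and assume moreover that $\|\cdot\|_A$ is separable on $S=V\oplus W$ for subspaces $V,W$. Assume that there exist $\eta\in\mathbb{R}^M$ and $\alpha\in\partial\|\cdot\|_A(L^*x^\star)$ with $\Phi^*\eta=L\alpha$ and $\|\alpha_V\|_A^*<1$, and that $\Phi$ is injective on $\ker(L_V^* )$. Then $x^\star$ is the unique minimizer of this problem.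
   Context: For a subspace $V\subset\mathbb{R}^P$, $P_V$ denotes the orthogonal projector onto $V$, and $L_V=LP_V$, $L_V^*=P_VL^*$, $\alpha_V=P_V\alpha$ for $\alpha\in\mathbb{R}^P$. A norm $\|\cdot\|_A$ on $\mathbb{R}^P$ is decomposable at $u\in\mathbb{R}^P$ if (i) there exist a subspace $T\subset\mathbb{R}^P$ and a vector $e\in T$ such that $\partial\|\cdot\|_A(u)=\{\alpha\in\mathbb{R}^P:\ \alpha_T=e,\ \|\alpha_{T^\perp}\|_A^*\le 1\}$, and (ii) for every $z\in T^\perp$, $\|z\|_A=\sup\{\langle v,z\rangle: v\in T^\perp,\ \|v\|_A^*\le 1\}$. The decomposable norm is separable on $T^\perp=S=V\oplus W$ if $\|u_{T^\perp}\|_A=\|u_V\|_A+\|u_W\|_A$ for all $u\in\mathbb{R}^P$. *)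

theory Defs
  imports "HOL-Analysis.Analysis"
begin

definition orth_comp :: "('a::real_inner) set \<Rightarrow> 'a set" where
  "orth_comp V = {x. \<forall>v\<in>V. x \<bullet> v = 0}"

definition proj :: "('a::real_inner) set \<Rightarrow> 'a \<Rightarrow> 'a" where
  "proj V x = (THE p. p \<in> V \<and> (\<forall>v\<in>V. (x - p) \<bullet> v = 0))"

definition is_norm :: "('a::real_vector \<Rightarrow> real) \<Rightarrow> bool" where
  "is_norm nA \<longleftrightarrow> (\<forall>x. nA x = 0 \<longleftrightarrow> x = 0)
     \<and> (\<forall>c x. nA (c *\<^sub>R x) = \<bar>c\<bar> * nA x)
     \<and> (\<forall>x y. nA (x + y) \<le> nA x + nA y)"

definition dual_norm :: "('a::real_inner \<Rightarrow> real) \<Rightarrow> 'a \<Rightarrow> real" where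
  "dual_norm nA v = Sup {v \<bullet> z | z. nA z \<le> 1}"

definition subdiff :: "('a::real_inner \<Rightarrow> real) \<Rightarrow> 'a \<Rightarrow> 'a set" where
  "subdiff f u = {a. \<forall>z. f u + a \<bullet> (z - u) \<le> f z}"

definition decomposable_at :: "('a::real_inner \<Rightarrow> real) \<Rightarrow> 'a \<Rightarrow> 'a set \<Rightarrow> 'a \<Rightarrow> bool" where
  "decomposable_at nA u T e \<longleftrightarrow> subspace T \<and> e \<in> T
     \<and> subdiff nA u = {a. proj T a = e \<and> dual_norm nA (proj (orth_comp T) a) \<le> 1}
     \<and> (\<forall>z\<in>orth_comp T. nA z = Sup {v \<bullet> z | v. v \<in> orth_comp T \<and> dual_norm nA v \<le> 1})"

definition separable_on :: "('a::real_inner \<Rightarrow> real) \<Rightarrow> 'a set \<Rightarrow> 'a set \<Rightarrow> 'a set \<Rightarrow> bool" where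
  "separable_on nA T V W \<longleftrightarrow> subspace V \<and> subspace W
     \<and> (\<forall>v\<in>V. \<forall>w\<in>W. v \<bullet> w = 0)
     \<and> orth_comp T = {v + w | v w. v \<in> V \<and> w \<in> W}
     \<and> (\<forall>u. nA (proj (orth_comp T) u) = nA (proj V u) + nA (proj W u))"

end

theory Submission imports Defs begin

lemma isn:
  assumes "is_norm nA"
  shows "nA 0 = 0" "nA (-x) = nA x" "nA x \<ge> 0" "nA (x+y) \<le> nA x + nA y"
    "nA (c *\<^sub>R x) = \<bar>c\<bar> * nA x" "nA x = 0 \<longleftrightarrow> x = 0"
proof -
  show z: "nA 0 = 0" using assms unfolding is_norm_def by auto
  show m: "nA (-x) = nA x" using assms unfolding is_norm_def
    by (metis abs_minus_cancel abs_one mult_1 scaleR_minus1_left)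
  have "nA (x + -x) \<le> nA x + nA (-x)" using assms unfolding is_norm_def by blast
  then show "nA x \<ge> 0" using z m by simp
  show "nA (x+y) \<le> nA x + nA y" "nA (c *\<^sub>R x) = \<bar>c\<bar> * nA x" "nA x = 0 \<longleftrightarrow> x = 0"
    using assms unfolding is_norm_def by auto
qed

lemma nA_sum:
  assumes "is_norm nA" "finite A"
  shows "nA (sum f A) \<le> (\<Sum>i\<in>A. nA (f i))"
  using assms(2)
proof (induction A rule: finite_induct)
  case empty then show ?case using isn(1)[OF assms(1)] by simp
next
  case (insert a A)
  then show ?case using isn(4)[OF assms(1), of "f a" "sum f A"] by simp
qed

lemma nA_upper:
  fixes nA :: "'a::euclidean_space \<Rightarrow> real"
  assumes "is_norm nA"
  shows "\<exists>K\<ge>0. \<forall>x. nA x \<le> K * norm x"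
proof (intro exI[of _ "\<Sum>i\<in>Basis. nA i"] conjI allI)
  show "0 \<le> (\<Sum>i\<in>Basis. nA i)" using isn(3)[OF assms] by (simp add: sum_nonneg)
  fix x :: 'a
  have "nA x = nA (\<Sum>i\<in>Basis. (x \<bullet> i) *\<^sub>R i)" by (simp add: euclidean_representation)
  also have "\<dots> \<le> (\<Sum>i\<in>Basis. nA ((x \<bullet> i) *\<^sub>R i))" by (rule nA_sum[OF assms]) simp
  also have "\<dots> = (\<Sum>i\<in>Basis. \<bar>x \<bullet> i\<bar> * nA i)" using isn(5)[OF assms] by simp
  also have "\<dots> \<le> (\<Sum>i\<in>Basis. norm x * nA i)"
    by (rule sum_mono, rule mult_right_mono) (auto simp: Basis_le_norm isn(3)[OF assms])
  also have "\<dots> = (\<Sum>i\<in>Basis. nA i) * norm x" by (simp add: sum_distrib_left mult.commute)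
  finally show "nA x \<le> (\<Sum>i\<in>Basis. nA i) * norm x" .
qed

lemma nA_cont:
  fixes nA :: "'a::euclidean_space \<Rightarrow> real"
  assumes "is_norm nA"
  shows "continuous_on S nA"
proof -
  obtain K where K: "K \<ge> 0" "\<And>x. nA x \<le> K * norm x" using nA_upper[OF assms] by blast
  have L: "\<bar>nA x - nA y\<bar> \<le> (K+1) * dist x y" for x y
  proof -
    have "nA x \<le> nA y + nA (x - y)" using isn(4)[OF assms, of y "x - y"] by simp
    moreover have "nA y \<le> nA x + nA (y - x)" using isn(4)[OF assms, of x "y - x"] by simp
    moreover have "nA (y - x) = nA (x - y)" using isn(2)[OF assms, of "x - y"] by simp
    moreover have "nA (x - y) \<le> K * dist x y" using K(2) by (simp add: dist_norm)
    moreover have "K * dist x y \<le> (K+1) * dist x y" by (simp add: mult_right_mono)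
    ultimately show ?thesis by linarith
  qed
  show ?thesis unfolding continuous_on_iff
  proof (intro ballI allI impI)
    fix x e assume "x \<in> S" "(e::real) > 0"
    show "\<exists>d>0. \<forall>x'\<in>S. dist x' x < d \<longrightarrow> dist (nA x') (nA x) < e"
    proof (intro exI[of _ "e / (K+1)"] conjI ballI impI)
      show "e / (K+1) > 0" using \<open>e > 0\<close> K by simp
      fix x' assume "dist x' x < e / (K+1)"
      then have "(K+1) * dist x' x < e" using K by (simp add: field_simps)
      then show "dist (nA x') (nA x) < e" using L[of x' x] by (simp add: dist_real_def)
    qed
  qed
qed

lemma nA_lower:
  fixes nA :: "'a::euclidean_space \<Rightarrow> real"
  assumes "is_norm nA"
  shows "\<exists>c>0. \<forall>x. c * norm x \<le> nA x"
proof -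
  obtain b :: 'a where b: "b \<in> Basis" using nonempty_Basis by blast
  have ne: "sphere (0::'a) 1 \<noteq> {}" using b by (auto simp: norm_Basis)
  obtain x0 where x0: "x0 \<in> sphere 0 1" "\<And>y. y \<in> sphere 0 1 \<Longrightarrow> nA x0 \<le> nA y"
    using continuous_attains_inf[OF compact_sphere ne nA_cont[OF assms]] by blast
  have "x0 \<noteq> 0" using x0(1) by auto
  then have c: "nA x0 > 0" using isn(3,6)[OF assms, of x0] by linarith
  show ?thesis
  proof (intro exI[of _ "nA x0"] conjI allI c)
    fix x :: 'a
    show "nA x0 * norm x \<le> nA x"
    proof (cases "x = 0")
      case True then show ?thesis using isn(3)[OF assms, of x] by simp
    next
      case False
      have "(x /\<^sub>R norm x) \<in> sphere 0 1" using False by simp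
      then have "nA x0 \<le> nA (x /\<^sub>R norm x)" by (rule x0(2))
      also have "\<dots> = nA x / norm x" using isn(5)[OF assms, of "inverse (norm x)" x] by (simp add: divide_inverse mult.commute)
      finally show ?thesis using False by (simp add: field_simps)
    qed
  qed
qed

lemma dual_ineq:
  fixes nA :: "'a::euclidean_space \<Rightarrow> real"
  assumes "is_norm nA"
  shows "v \<bullet> z \<le> dual_norm nA v * nA z"
proof -
  obtain c where c: "c > 0" "\<And>x. c * norm x \<le> nA x" using nA_lower[OF assms] by blast
  let ?S = "{v \<bullet> z | z. nA z \<le> 1}"
  have bdd: "bdd_above ?S"
  proof (rule bdd_aboveI[of _ "norm v / c"], clarify)
    fix z assume "nA z \<le> 1"
    then have "norm z \<le> 1 / c" using c(2)[of z] c(1) by (simp add: field_simps)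
    then have "norm v * norm z \<le> norm v * (1/c)" by (rule mult_left_mono) simp_all
    then show "v \<bullet> z \<le> norm v / c" using Cauchy_Schwarz_ineq2[of v z] by (simp add: divide_inverse)
  qed
  have up: "v \<bullet> w \<le> dual_norm nA v" if "nA w \<le> 1" for w
    unfolding dual_norm_def by (rule cSup_upper[OF _ bdd]) (use that in blast)
  show ?thesis
  proof (cases "z = 0")
    case True
    have "0 \<le> dual_norm nA v" using up[of 0] isn(1)[OF assms] by simp
    then show ?thesis using True isn(1)[OF assms] by simp
  next
    case False
    let ?n = "nA z"
    have n: "?n > 0" using False isn(3,6)[OF assms, of z] by linarith
    have "nA (z /\<^sub>R ?n) = 1" using isn(5)[OF assms, of "inverse ?n" z] n by (simp add: divide_inverse)
    then have "v \<bullet> (z /\<^sub>R ?n) \<le> dual_norm nA v" using up by (metis order_refl)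
    then have "(v \<bullet> z) / ?n \<le> dual_norm nA v" by (simp add: inner_scaleR_right divide_inverse mult.commute)
    then show ?thesis using n by (simp add: field_simps)
  qed
qed

lemma dual_zero:
  assumes "is_norm nA"
  shows "dual_norm nA 0 = 0"
proof -
  have "{(0::'a) \<bullet> z | z. nA z \<le> 1} = {0}" proof
    show "{(0::'a) \<bullet> z | z. nA z \<le> 1} \<subseteq> {0}" by auto
    have "(0::real) = (0::'a) \<bullet> 0 \<and> nA 0 \<le> 1" using isn(1)[OF assms] by simp
    then show "{0} \<subseteq> {(0::'a) \<bullet> z | z. nA z \<le> 1}" by blast
  qed
  then show ?thesis unfolding dual_norm_def by simp
qed

lemma proj_unique:
  fixes V :: "'a::euclidean_space set"
  assumes "subspace V" "p \<in> V" "\<forall>v\<in>V. (x - p) \<bullet> v = 0"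
  shows "proj V x = p"
  unfolding proj_def
proof (rule the_equality)
  show "p \<in> V \<and> (\<forall>v\<in>V. (x - p) \<bullet> v = 0)" using assms by blast
  fix q assume q: "q \<in> V \<and> (\<forall>v\<in>V. (x - q) \<bullet> v = 0)"
  have d: "p - q \<in> V" using assms(1,2) q by (simp add: subspace_diff)
  have "(p - q) \<bullet> (p - q) = (x - q) \<bullet> (p - q) - (x - p) \<bullet> (p - q)"
    by (simp add: inner_diff_left)
  also have "\<dots> = 0" using q assms(3) d by simp
  finally show "q = p" by simp
qed

lemma proj_in:
  fixes V :: "'a::euclidean_space set"
  assumes "subspace V"
  shows "proj V x \<in> V" "\<forall>v\<in>V. (x - proj V x) \<bullet> v = 0"
proof -
  obtain y z where yz: "y \<in> span V" "\<And>w. w \<in> span V \<Longrightarrow> orthogonal z w" "x = y + z"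
    using orthogonal_subspace_decomp_exists[of V x] by blast
  have sV: "span V = V" using assms by simp
  have "proj V x = y" using yz sV by (intro proj_unique[OF assms]) (auto simp: orthogonal_def)
  then show "proj V x \<in> V" "\<forall>v\<in>V. (x - proj V x) \<bullet> v = 0"
    using yz sV by (auto simp: orthogonal_def)
qed


theorem corollary2:
  fixes Phi :: "real^'n^'m" and L :: "real^'p^'n"
    and nA :: "real^'p \<Rightarrow> real"
    and y :: "real^'m" and lambda :: real and xs :: "real^'n"
    and T V W :: "(real^'p) set" and e :: "real^'p"
  defines "J \<equiv> (\<lambda>x. (1/2) * (norm (y - Phi *v x))\<^sup>2 + lambda * nA (transpose L *v x))"
  assumes norm: "is_norm nA"
    and lam: "lambda > 0"
    and minim: "\<forall>x. J xs \<le> J x"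
    and decomp: "decomposable_at nA (transpose L *v xs) T e"
    and sep: "separable_on nA T V W"
    and cert: "\<exists>eta alpha. alpha \<in> subdiff nA (transpose L *v xs)
                 \<and> transpose Phi *v eta = L *v alpha
                 \<and> dual_norm nA (proj V alpha) < 1"
    and inj: "inj_on (\<lambda>x. Phi *v x) {x. proj V (transpose L *v x) = 0}"
  shows "\<forall>x. (\<forall>z. J x \<le> J z) \<longrightarrow> x = xs"
proof (intro allI impI)
  fix x assume xm: "\<forall>z. J x \<le> J z"
  obtain eta alpha where al: "alpha \<in> subdiff nA (transpose L *v xs)"
    and eta: "transpose Phi *v eta = L *v alpha" and dV: "dual_norm nA (proj V alpha) < 1"
    using cert by blast
  define u where "u = transpose L *v xs"
  define S where "S = orth_comp T"
  have Tsub: "subspace T" and eT: "e \<in> T"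
    and sd: "subdiff nA u = {a. proj T a = e \<and> dual_norm nA (proj S a) \<le> 1}"
    and ii: "\<And>z. z \<in> S \<Longrightarrow> nA z = Sup {v \<bullet> z | v. v \<in> S \<and> dual_norm nA v \<le> 1}"
    using decomp unfolding decomposable_at_def u_def S_def by auto
  have Vsub: "subspace V" and Wsub: "subspace W" and VW: "\<And>v w. v \<in> V \<Longrightarrow> w \<in> W \<Longrightarrow> v \<bullet> w = 0"
    and Seq: "S = {v + w | v w. v \<in> V \<and> w \<in> W}"
    and sepn: "\<And>u. nA (proj S u) = nA (proj V u) + nA (proj W u)"
    using sep unfolding separable_on_def S_def by auto
  have Ssub: "subspace S" unfolding subspace_def S_def orth_comp_def
    by (auto simp: inner_add_left)
  have VS: "V \<subseteq> S" unfolding Seq using subspace_0[OF Wsub] by force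
  have WS: "W \<subseteq> S" unfolding Seq using subspace_0[OF Vsub] by force
  have orthS: "\<And>s t. s \<in> S \<Longrightarrow> t \<in> T \<Longrightarrow> s \<bullet> t = 0" unfolding S_def orth_comp_def by auto
  note pS = proj_in[OF Ssub] and pV = proj_in[OF Vsub] and pW = proj_in[OF Wsub] and pT = proj_in[OF Tsub]
  have Psplit: "proj S w = proj V w + proj W w" for w
  proof (rule proj_unique[OF Ssub])
    show "proj V w + proj W w \<in> S" unfolding Seq using pV pW by blast
    show "\<forall>s\<in>S. (w - (proj V w + proj W w)) \<bullet> s = 0"
    proof
      fix s assume "s \<in> S"
      then obtain v0 w0 where s: "s = v0 + w0" "v0 \<in> V" "w0 \<in> W" unfolding Seq by blast
      have "(w - (proj V w + proj W w)) \<bullet> s =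
          (w - proj V w) \<bullet> v0 - proj W w \<bullet> v0 + (w - proj W w) \<bullet> w0 - proj V w \<bullet> w0"
        unfolding s by (simp add: inner_add_right inner_diff_left algebra_simps)
      also have "\<dots> = 0" using pV pW s VW[of v0 "proj W w"] VW[of "proj V w" w0]
        by (simp add: inner_commute)
      finally show "(w - (proj V w + proj W w)) \<bullet> s = 0" .
    qed
  qed

  have Jx: "J x = J xs" using xm minim by (meson order_antisym)
  define a where "a = y - Phi *v x"
  define b where "b = y - Phi *v xs"
  define z where "z = (1/2) *\<^sub>R (x + xs)"
  have Pz: "Phi *v z = (1/2) *\<^sub>R (Phi *v x + Phi *v xs)"
    unfolding z_def by (simp add: matrix_vector_right_distrib matrix_vector_mult_scaleR)
  have yz: "y - Phi *v z = (1/2) *\<^sub>R (a + b)"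
  proof -
    have "(1/2) *\<^sub>R (a + b) = (1/2) *\<^sub>R (2 *\<^sub>R y) - (1/2) *\<^sub>R (Phi *v x + Phi *v xs)"
      unfolding a_def b_def by (simp add: scaleR_2 algebra_simps)
    then show ?thesis using Pz by simp
  qed
  have Lz: "transpose L *v z = (1/2) *\<^sub>R (transpose L *v x + transpose L *v xs)"
    unfolding z_def by (simp add: matrix_vector_right_distrib matrix_vector_mult_scaleR)
  have nz: "nA (transpose L *v z) \<le> (1/2) * (nA (transpose L *v x) + nA (transpose L *v xs))"
    unfolding Lz using isn(4,5)[OF norm] by (simp add: distrib_left)
  have par: "(norm ((1/2) *\<^sub>R (a + b)))\<^sup>2 = ((norm a)\<^sup>2 + (norm b)\<^sup>2) / 2 - (norm (a - b))\<^sup>2 / 4"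
    apply (simp add: power2_norm_eq_inner inner_add_left inner_add_right inner_diff_left inner_diff_right inner_commute algebra_simps)
    apply (simp add: field_simps)
    done
  have "J z \<le> (J x + J xs) / 2 - (norm (a - b))\<^sup>2 / 8"
  proof -
    have "lambda * nA (transpose L *v z) \<le> lambda * nA (transpose L *v x) / 2 + lambda * nA (transpose L *v xs) / 2"
      using mult_left_mono[OF nz, of lambda] lam by (simp add: algebra_simps)
    moreover have "J z = (1/2) * (norm (y - Phi *v z))\<^sup>2 + lambda * nA (transpose L *v z)"
      unfolding J_def ..
    moreover have "J x = (1/2) * (norm a)\<^sup>2 + lambda * nA (transpose L *v x)"
      unfolding J_def a_def ..
    moreover have "J xs = (1/2) * (norm b)\<^sup>2 + lambda * nA (transpose L *v xs)"
      unfolding J_def b_def ..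
    moreover have "(norm (y - Phi *v z))\<^sup>2 = ((norm a)\<^sup>2 + (norm b)\<^sup>2) / 2 - (norm (a - b))\<^sup>2 / 4"
      using yz par by simp
    ultimately show ?thesis by (simp add: field_simps)
  qed
  moreover have "J x \<le> J z" using xm by blast
  ultimately have "J z * 8 + (norm (a - b))\<^sup>2 \<le> J xs * 8" "J xs \<le> J z" using Jx by (simp_all add: field_simps)
  then have "(norm (a - b))\<^sup>2 \<le> 0" by linarith
  then have "a = b" by simp
  then have Pxx: "Phi *v x = Phi *v xs" unfolding a_def b_def by simp
  then have nAx: "nA (transpose L *v x) = nA u"
    using Jx lam unfolding J_def u_def by simp

  define h where "h = x - xs"
  define h' where "h' = transpose L *v h"
  have Ph: "Phi *v h = 0" unfolding h_def using Pxx by (simp add: matrix_vector_mult_diff_distrib)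
  have uh: "u + h' = transpose L *v x" unfolding u_def h'_def h_def
    by (simp add: matrix_vector_mult_diff_distrib)
  have ah: "alpha \<bullet> h' = 0"
  proof -
    have "alpha \<bullet> h' = (h v* L) \<bullet> alpha" unfolding h'_def by (simp add: inner_commute)
    also have "\<dots> = h \<bullet> (L *v alpha)" by (rule dot_lmul_matrix)
    also have "\<dots> = h \<bullet> (eta v* Phi)" using eta by simp
    also have "\<dots> = (eta v* Phi) \<bullet> h" by (simp add: inner_commute)
    also have "\<dots> = eta \<bullet> (Phi *v h)" by (rule dot_lmul_matrix)
    finally show ?thesis using Ph by simp
  qed

  have alu: "alpha \<in> subdiff nA u" using al unfolding u_def .
  then have peT: "proj T alpha = e" and dS: "dual_norm nA (proj S alpha) \<le> 1" using sd by auto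
  define D where "D = nA (u + h') - nA u - alpha \<bullet> h' + proj S alpha \<bullet> h'"
  have low: "nA (proj S h') \<le> D"
  proof -
    have "nA (proj S h') = Sup {v \<bullet> proj S h' | v. v \<in> S \<and> dual_norm nA v \<le> 1}"
      using ii pS by blast
    also have "\<dots> \<le> D"
    proof (rule cSup_least)
      have "(0::real^'p) \<in> S \<and> dual_norm nA 0 \<le> 1" using subspace_0[OF Ssub] dual_zero[OF norm] by simp
      then show "{v \<bullet> proj S h' | v. v \<in> S \<and> dual_norm nA v \<le> 1} \<noteq> {}" by blast
    next
      fix r assume "r \<in> {v \<bullet> proj S h' | v. v \<in> S \<and> dual_norm nA v \<le> 1}"
      then obtain v where r: "r = v \<bullet> proj S h'" and vS: "v \<in> S" and dv: "dual_norm nA v \<le> 1" by blast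
      define a' where "a' = alpha - proj S alpha + v"
      have pSa: "proj S a' = v"
      proof (rule proj_unique[OF Ssub vS], intro ballI)
        fix s assume "s \<in> S"
        then show "(a' - v) \<bullet> s = 0" unfolding a'_def using pS by simp
      qed
      have pTa: "proj T a' = e"
      proof (rule proj_unique[OF Tsub eT], intro ballI)
        fix t assume t: "t \<in> T"
        have "proj S alpha - v \<in> S" using pS vS Ssub by (simp add: subspace_diff)
        then have 1: "(proj S alpha - v) \<bullet> t = 0" using orthS t by blast
        have 2: "(alpha - e) \<bullet> t = 0" using pT t peT by blast
        have "(a' - e) \<bullet> t = (alpha - e) \<bullet> t - (proj S alpha - v) \<bullet> t"
          unfolding a'_def by (simp add: inner_diff_left inner_add_left)
        then show "(a' - e) \<bullet> t = 0" using 1 2 by simp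
      qed
      have "a' \<in> subdiff nA u" using sd pSa pTa dv by simp
      then have "nA u + a' \<bullet> ((u + h') - u) \<le> nA (u + h')" unfolding subdiff_def by blast
      then have 3: "nA u + a' \<bullet> h' \<le> nA (u + h')" by simp
      have "v \<bullet> h' = v \<bullet> proj S h'"
      proof -
        have "(h' - proj S h') \<bullet> v = 0" using pS vS by blast
        then show ?thesis by (simp add: inner_diff_left inner_diff_right inner_commute)
      qed
      moreover have "a' \<bullet> h' = alpha \<bullet> h' - proj S alpha \<bullet> h' + v \<bullet> h'"
        unfolding a'_def by (simp add: inner_diff_left inner_add_left)
      ultimately show "r \<le> D" using 3 r unfolding D_def by linarith
    qed
    finally show ?thesis .
  qed
  have up: "proj S alpha \<bullet> h' \<le> dual_norm nA (proj V alpha) * nA (proj V h') + nA (proj W h')"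
  proof -
    have e1: "proj S alpha \<bullet> h' = proj S alpha \<bullet> proj S h'"
    proof -
      have "(h' - proj S h') \<bullet> proj S alpha = 0" using pS by blast
      then show ?thesis by (simp add: inner_diff_left inner_diff_right inner_commute)
    qed
    have e2: "proj S alpha \<bullet> proj V h' = proj V alpha \<bullet> proj V h'"
    proof -
      have "(alpha - proj S alpha) \<bullet> proj V h' = 0" using pS pV VS by blast
      moreover have "(alpha - proj V alpha) \<bullet> proj V h' = 0" using pV by blast
      ultimately show ?thesis by (simp add: inner_diff_left)
    qed
    have "proj V alpha \<bullet> proj V h' \<le> dual_norm nA (proj V alpha) * nA (proj V h')" by (rule dual_ineq[OF norm])
    moreover have "proj S alpha \<bullet> proj W h' \<le> dual_norm nA (proj S alpha) * nA (proj W h')" by (rule dual_ineq[OF norm])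
    moreover have "dual_norm nA (proj S alpha) * nA (proj W h') \<le> nA (proj W h')"
      using dS isn(3)[OF norm, of "proj W h'"] using mult_right_mono[OF dS, of "nA (proj W h')"] by simp
    ultimately show ?thesis using e1 e2 Psplit[of h'] by (simp add: inner_add_right)
  qed
  have "D = proj S alpha \<bullet> h'" unfolding D_def using uh nAx ah by simp
  then have "nA (proj V h') + nA (proj W h') \<le> dual_norm nA (proj V alpha) * nA (proj V h') + nA (proj W h')"
    using low up sepn[of h'] by linarith
  then have "(1 - dual_norm nA (proj V alpha)) * nA (proj V h') \<le> 0" by (simp add: algebra_simps)
  moreover have "1 - dual_norm nA (proj V alpha) > 0" using dV by simp
  ultimately have "nA (proj V h') \<le> 0" by (simp add: mult_le_0_iff)
  then have "nA (proj V h') = 0" using isn(3)[OF norm, of "proj V h'"] by simp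
  then have PVh: "proj V h' = 0" using isn(6)[OF norm] by simp

  have "proj V (transpose L *v 0) = 0"
    by (simp, rule proj_unique[OF Vsub subspace_0[OF Vsub]]) simp
  then have "h = 0" using inj PVh Ph unfolding h'_def inj_on_def by force
  then show "x = xs" unfolding h_def by simp
qed

end
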